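(* Let $\Bbbk$ be a field and let $\mathscr{C}$ be a Möbius category. Let $C$ be its incidence coalgebra: the $\Bbbk$-vector space with basis the set of arrows of $\mathscr{C}$, with $\Delta(f)=\sum_{(a,b):\,b\circ a=f}a\otimes b$ and $\epsilon(f)=1$ if $f$ is an identity arrow and $\epsilon(f)=0$ otherwise. For an arrow $f$ let $\ell(f)$ be the maximal $k$ such that $f=a_k\circ\cdots\circ a_1$ with all $a_i$ non-identity arrows ($\ell(f)=0$ for identities), let $C_n$ be the span of the arrows $f$ with $\ell(f)\le n$, and $C(n)$ the span of the arrows with $\ell(f)=n$. Then: $C_0\subset C_1\subset\cdots$ is a coalgebra filtration of $C$ (i.e. $\bigcup_n C_n=C$ and $\Delta(C_n)\subset\sum_{i+j=n}C_i\otimes C_j$); $C_n=C_{n-1}\oplus C(n)$ with $C(n)\subset\operatorname{Ker}\epsilon$ for $n\geq1$; $C_0$ is spanned by the identity arrows, which are group-like; and for every arrow $f:x\to y$ with $\ell(f)=n$, the projections of $\Delta(f)$ onto $C(0)\otimes C(n)$ and $C(n)\otimes C(0)$ are $\operatorname{id}_x\otimes f$ and $f\otimes\operatorname{id}_y$ respectively. In other words, the incidence coalgebra satisfies Hypothesis II (with the arrows as combinatorial elements, $\operatorname{in}(f)=\operatorname{id}_x$ and $\operatorname{out}(f)=\operatorname{id}_y$).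
   Context: A Möbius category (in the sense of Leroux) is a category in which every arrow $f$ admits only finitely many factorisations $f=a_k\circ\cdots\circ a_1$ ($k\ge0$) into non-identity arrows $a_i$ (the empty factorisation, $k=0$, only for identities). An element $x\ne0$ of a coalgebra is group-like if $\Delta(x)=x\otimes x$. Hypothesis II for a coalgebra $C$ means: $C$ is filtered, with chosen complements $C(n)\subset\operatorname{Ker}\epsilon$ ($n\ge1$), $C(0)=C_0$, and has a basis of homogeneous "combinatorial elements" closed under comultiplication, such that for every combinatorial element $f$ of degree $n$ the $(0,n)$- and $(n,0)$-components of $\Delta(f)$ are $\operatorname{in}(f)\otimes f$ and $f\otimes\operatorname{out}(f)$ with $\operatorname{in}(f),\operatorname{out}(f)$ group-like combinatorial elements. *)

theory Defs
  imports Main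
begin

text \<open>A (small) category, given by a set of objects, a set of arrows, source and
target maps, composition (cmp C g f = g after f, meaningful when tgt f = src g)
and identities.\<close>

record ('o, 'a) category =
  obj :: "'o set"
  arr :: "'a set"
  src :: "'a \<Rightarrow> 'o"
  tgt :: "'a \<Rightarrow> 'o"
  cmp :: "'a \<Rightarrow> 'a \<Rightarrow> 'a"
  idn :: "'o \<Rightarrow> 'a"

definition is_category :: "('o, 'a) category \<Rightarrow> bool" where
  "is_category C \<longleftrightarrow>
     (\<forall>f\<in>arr C. src C f \<in> obj C \<and> tgt C f \<in> obj C) \<and>
     (\<forall>x\<in>obj C. idn C x \<in> arr C \<and> src C (idn C x) = x \<and> tgt C (idn C x) = x) \<and>
     (\<forall>f\<in>arr C. \<forall>g\<in>arr C. tgt C f = src C g \<longrightarrow>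
         cmp C g f \<in> arr C \<and> src C (cmp C g f) = src C f \<and> tgt C (cmp C g f) = tgt C g) \<and>
     (\<forall>f\<in>arr C. cmp C (idn C (tgt C f)) f = f \<and> cmp C f (idn C (src C f)) = f) \<and>
     (\<forall>f\<in>arr C. \<forall>g\<in>arr C. \<forall>h\<in>arr C. tgt C f = src C g \<and> tgt C g = src C h \<longrightarrow>
         cmp C h (cmp C g f) = cmp C (cmp C h g) f)"

definition ids :: "('o, 'a) category \<Rightarrow> 'a set" where
  "ids C = idn C ` obj C"

text \<open>comp_list C a [b1,...,bk] = bk o ... o b1 o a\<close>
fun comp_list :: "('o, 'a) category \<Rightarrow> 'a \<Rightarrow> 'a list \<Rightarrow> 'a" where
  "comp_list C acc [] = acc"
| "comp_list C acc (b # bs) = comp_list C (cmp C b acc) bs"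

definition composable_chain :: "('o, 'a) category \<Rightarrow> 'a list \<Rightarrow> bool" where
  "composable_chain C as \<longleftrightarrow> (\<forall>i. Suc i < length as \<longrightarrow> tgt C (as ! i) = src C (as ! Suc i))"

text \<open>Factorisations f = a_k o ... o a_1 into non-identity arrows, as lists [a_1,...,a_k];
the empty factorisation only for identities.\<close>
definition factorizations :: "('o, 'a) category \<Rightarrow> 'a \<Rightarrow> 'a list set" where
  "factorizations C f = {as. set as \<subseteq> arr C - ids C \<and> composable_chain C as \<and>
      (case as of [] \<Rightarrow> f \<in> ids C | a # bs \<Rightarrow> comp_list C a bs = f)}"

definition mobius_category :: "('o, 'a) category \<Rightarrow> bool" where
  "mobius_category C \<longleftrightarrow> is_category C \<and> (\<forall>f\<in>arr C. finite (factorizations C f))"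

definition ell :: "('o, 'a) category \<Rightarrow> 'a \<Rightarrow> nat" where
  "ell C f = Max (length ` factorizations C f)"

text \<open>Incidence coalgebra: the free vector space on the arrows, as finitely supported
functions arr C \<rightarrow> k; C \<otimes> C is identified with the free vector space on arr C \<times> arr C.\<close>

definition incidence_space :: "('o, 'a) category \<Rightarrow> ('a \<Rightarrow> 'k::zero) set" where
  "incidence_space C = {v. finite {f. v f \<noteq> 0} \<and> (\<forall>f. v f \<noteq> 0 \<longrightarrow> f \<in> arr C)}"

definition tensor_space :: "('o, 'a) category \<Rightarrow> ('a \<times> 'a \<Rightarrow> 'k::zero) set" where
  "tensor_space C = {t. finite {p. t p \<noteq> 0} \<and> (\<forall>p. t p \<noteq> 0 \<longrightarrow> p \<in> arr C \<times> arr C)}"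

definition bv :: "'a \<Rightarrow> ('a \<Rightarrow> 'k::{zero,one})" where
  "bv f = (\<lambda>g. if g = f then 1 else 0)"

definition tensor :: "('a \<Rightarrow> 'k::times) \<Rightarrow> ('a \<Rightarrow> 'k) \<Rightarrow> ('a \<times> 'a \<Rightarrow> 'k)" where
  "tensor u w = (\<lambda>(a, b). u a * w b)"

text \<open>Comultiplication Delta(f) = sum over (a,b) with b o a = f of a \<otimes> b, extended linearly:
the coefficient of a \<otimes> b in Delta(v) is v(b o a) when a, b are composable, else 0.\<close>
definition comult :: "('o, 'a) category \<Rightarrow> ('a \<Rightarrow> 'k::zero) \<Rightarrow> ('a \<times> 'a \<Rightarrow> 'k)" where
  "comult C v = (\<lambda>(a, b). if a \<in> arr C \<and> b \<in> arr C \<and> tgt C a = src C b then v (cmp C b a) else 0)"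

definition counit :: "('o, 'a) category \<Rightarrow> ('a \<Rightarrow> 'k::comm_monoid_add) \<Rightarrow> 'k" where
  "counit C v = sum v {f \<in> ids C. v f \<noteq> 0}"

definition span_arrows :: "('o, 'a) category \<Rightarrow> 'a set \<Rightarrow> ('a \<Rightarrow> 'k::zero) set" where
  "span_arrows C S = {v \<in> incidence_space C. \<forall>f. v f \<noteq> 0 \<longrightarrow> f \<in> S}"

definition span_pairs :: "('o, 'a) category \<Rightarrow> ('a \<times> 'a) set \<Rightarrow> ('a \<times> 'a \<Rightarrow> 'k::zero) set" where
  "span_pairs C P = {t \<in> tensor_space C. \<forall>p. t p \<noteq> 0 \<longrightarrow> p \<in> P}"

definition filt :: "('o, 'a) category \<Rightarrow> nat \<Rightarrow> ('a \<Rightarrow> 'k::zero) set" where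
  "filt C n = span_arrows C {f \<in> arr C. ell C f \<le> n}"

definition grad :: "('o, 'a) category \<Rightarrow> nat \<Rightarrow> ('a \<Rightarrow> 'k::zero) set" where
  "grad C n = span_arrows C {f \<in> arr C. ell C f = n}"

text \<open>sum_{i+j=n} C_i \<otimes> C_j, which is spanned by the basis tensors a \<otimes> b with
l(a) \<le> i, l(b) \<le> j for some i + j = n.\<close>
definition filt_tensor :: "('o, 'a) category \<Rightarrow> nat \<Rightarrow> ('a \<times> 'a \<Rightarrow> 'k::zero) set" where
  "filt_tensor C n = span_pairs C (\<Union>i\<in>{..n}.
      {f \<in> arr C. ell C f \<le> i} \<times> {g \<in> arr C. ell C g \<le> n - i})"

definition proj_tensor :: "('o, 'a) category \<Rightarrow> nat \<Rightarrow> nat \<Rightarrow> ('a \<times> 'a \<Rightarrow> 'k::zero) \<Rightarrow> ('a \<times> 'a \<Rightarrow> 'k)" where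
  "proj_tensor C i j t = (\<lambda>(a, b). if a \<in> arr C \<and> b \<in> arr C \<and> ell C a = i \<and> ell C b = j then t (a, b) else 0)"

end

theory Submission
  imports Defs
begin

lemma cc_Nil[simp]: "composable_chain C []" and cc_single[simp]: "composable_chain C [a]"
  by (auto simp: composable_chain_def)

lemma cc_Cons2[simp]: "composable_chain C (a#b#bs) \<longleftrightarrow> tgt C a = src C b \<and> composable_chain C (b#bs)"
proof
  assume h: "composable_chain C (a#b#bs)"
  have "tgt C a = src C b" using h[unfolded composable_chain_def, rule_format, of 0] by simp
  moreover have "composable_chain C (b#bs)" unfolding composable_chain_def
  proof (intro allI impI)
    fix i assume "Suc i < length (b#bs)"
    then show "tgt C ((b#bs) ! i) = src C ((b#bs) ! Suc i)"
      using h[unfolded composable_chain_def, rule_format, of "Suc i"] by simp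
  qed
  ultimately show "tgt C a = src C b \<and> composable_chain C (b#bs)" by simp
next
  assume h: "tgt C a = src C b \<and> composable_chain C (b#bs)"
  show "composable_chain C (a#b#bs)" unfolding composable_chain_def
  proof (intro allI impI)
    fix i assume i: "Suc i < length (a#b#bs)"
    show "tgt C ((a#b#bs) ! i) = src C ((a#b#bs) ! Suc i)"
    proof (cases i)
      case 0 then show ?thesis using h by simp
    next
      case (Suc j) then show ?thesis using h i unfolding composable_chain_def by auto
    qed
  qed
qed

lemma cc_tail: "composable_chain C (a#bs) \<Longrightarrow> composable_chain C bs"
  by (cases bs) auto

lemma cc_swap: "tgt C x = tgt C y \<Longrightarrow> composable_chain C (x#ys) = composable_chain C (y#ys)"
  by (cases ys) auto

lemma cc_append: "composable_chain C xs \<Longrightarrow> composable_chain C (y#ys) \<Longrightarrow>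
   (xs \<noteq> [] \<longrightarrow> tgt C (last xs) = src C y) \<Longrightarrow> composable_chain C (xs @ y # ys)"
proof (induction xs)
  case Nil then show ?case by simp
next
  case (Cons x xs)
  show ?case
  proof (cases xs)
    case Nil then show ?thesis using Cons.prems by simp
  next
    case (Cons x' xs'')
    then show ?thesis using Cons.IH Cons.prems by (simp add: \<open>xs = x' # xs''\<close>)
  qed
qed

lemma comp_list_append: "comp_list C a (xs @ ys) = comp_list C (comp_list C a xs) ys"
  by (induction xs arbitrary: a) auto

lemma cat_facts:
  assumes "is_category C"
  shows cat_src_tgt: "f \<in> arr C \<Longrightarrow> src C f \<in> obj C \<and> tgt C f \<in> obj C"
  and cat_idn: "x \<in> obj C \<Longrightarrow> idn C x \<in> arr C \<and> src C (idn C x) = x \<and> tgt C (idn C x) = x"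
  and cat_cmp: "f \<in> arr C \<Longrightarrow> g \<in> arr C \<Longrightarrow> tgt C f = src C g \<Longrightarrow>
         cmp C g f \<in> arr C \<and> src C (cmp C g f) = src C f \<and> tgt C (cmp C g f) = tgt C g"
  and cat_unit: "f \<in> arr C \<Longrightarrow> cmp C (idn C (tgt C f)) f = f \<and> cmp C f (idn C (src C f)) = f"
  and cat_assoc: "f \<in> arr C \<Longrightarrow> g \<in> arr C \<Longrightarrow> h \<in> arr C \<Longrightarrow> tgt C f = src C g \<Longrightarrow> tgt C g = src C h \<Longrightarrow>
         cmp C h (cmp C g f) = cmp C (cmp C h g) f"
  using assms unfolding is_category_def by blast+

lemma ids_arr: "is_category C \<Longrightarrow> ids C \<subseteq> arr C"
proof
  fix a assume c: "is_category C" and "a \<in> ids C"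
  then obtain x where x: "x \<in> obj C" "a = idn C x" unfolding ids_def by blast
  show "a \<in> arr C" using cat_idn[OF c x(1)] x(2) by simp
qed

lemma ids_cases: "is_category C \<Longrightarrow> a \<in> ids C \<Longrightarrow> a = idn C (src C a) \<and> src C a \<in> obj C \<and> tgt C a = src C a"
proof -
  assume c: "is_category C" and "a \<in> ids C"
  then obtain x where x: "x \<in> obj C" "a = idn C x" unfolding ids_def by blast
  show ?thesis using cat_idn[OF c x(1)] x by simp
qed

lemma comp_list_props:
  assumes "is_category C"
  shows "set (a#bs) \<subseteq> arr C \<Longrightarrow> composable_chain C (a#bs) \<Longrightarrow>
    comp_list C a bs \<in> arr C \<and> src C (comp_list C a bs) = src C a \<and> tgt C (comp_list C a bs) = tgt C (last (a#bs))"
proof (induction bs arbitrary: a)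
  case Nil then show ?case by simp
next
  case (Cons b bs)
  have ab: "cmp C b a \<in> arr C \<and> src C (cmp C b a) = src C a \<and> tgt C (cmp C b a) = tgt C b"
    using cat_cmp[OF assms] Cons.prems by auto
  have "composable_chain C (cmp C b a # bs)"
    using cc_swap[of C "cmp C b a" b bs] ab Cons.prems(2) by auto
  then have "comp_list C (cmp C b a) bs \<in> arr C \<and> src C (comp_list C (cmp C b a) bs) = src C (cmp C b a) \<and>
     tgt C (comp_list C (cmp C b a) bs) = tgt C (last (cmp C b a # bs))"
    using Cons.IH[of "cmp C b a"] Cons.prems ab by auto
  then show ?case using ab by (cases bs) auto
qed

lemma comp_list_assoc:
  assumes "is_category C"
  shows "set (b#bs) \<subseteq> arr C \<Longrightarrow> composable_chain C (b#bs) \<Longrightarrow> a \<in> arr C \<Longrightarrow> tgt C a = src C b \<Longrightarrow>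
    comp_list C (cmp C b a) bs = cmp C (comp_list C b bs) a"
proof (induction bs arbitrary: b)
  case Nil then show ?case by simp
next
  case (Cons c cs)
  have bc: "cmp C c b \<in> arr C \<and> src C (cmp C c b) = src C b \<and> tgt C (cmp C c b) = tgt C c"
    using cat_cmp[OF assms] Cons.prems by auto
  have "composable_chain C (cmp C c b # cs)"
    using cc_swap[of C "cmp C c b" c cs] bc Cons.prems(2) by auto
  then have "comp_list C (cmp C (cmp C c b) a) cs = cmp C (comp_list C (cmp C c b) cs) a"
    using Cons.IH[of "cmp C c b"] Cons.prems bc by auto
  moreover have "cmp C c (cmp C b a) = cmp C (cmp C c b) a"
    using cat_assoc[OF assms] Cons.prems by auto
  ultimately show ?case by simp
qed

lemma fact_nonempty_arr:
  assumes "is_category C" "f \<in> arr C"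
  shows "factorizations C f \<noteq> {}"
proof (cases "f \<in> ids C")
  case True then have "[] \<in> factorizations C f" unfolding factorizations_def composable_chain_def by simp
  then show ?thesis by blast
next
  case False then have "[f] \<in> factorizations C f" using assms unfolding factorizations_def by simp
  then show ?thesis by blast
qed

lemma fact_ids:
  assumes m: "mobius_category C" and e: "e \<in> ids C"
  shows "factorizations C e = {[]}"
proof -
  have cat: "is_category C" using m unfolding mobius_category_def by simp
  have earr: "e \<in> arr C" using ids_arr[OF cat] e by blast
  have fin: "finite (factorizations C e)" using m earr unfolding mobius_category_def by blast
  have "[] \<in> factorizations C e" using e unfolding factorizations_def by simp
  moreover have False if l: "l \<in> factorizations C e" "l \<noteq> []" for l
  proof -
    obtain a bs where lab: "l = a # bs" using l(2) by (cases l) auto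
    have sl: "set l \<subseteq> arr C - ids C" and cl: "composable_chain C l" and ce: "comp_list C a bs = e"
      using l(1) unfolding factorizations_def lab by auto
    have p: "comp_list C a bs \<in> arr C \<and> src C (comp_list C a bs) = src C a \<and> tgt C (comp_list C a bs) = tgt C (last (a#bs))"
    proof -
      have "set (a#bs) \<subseteq> arr C" using sl lab by auto
      then show ?thesis using comp_list_props[OF cat, of a bs] cl lab by blast
    qed
    have ei: "e = idn C (src C e) \<and> tgt C e = src C e" using ids_cases[OF cat e] by simp
    have aarr: "a \<in> arr C" using sl lab by auto
    have lastsrc: "tgt C (last l) = src C a"
    proof -
      have "tgt C (last l) = tgt C (comp_list C a bs)" using p lab by simp
      also have "\<dots> = src C (comp_list C a bs)" using ce ei by simp
      also have "\<dots> = src C a" using p by simp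
      finally show ?thesis .
    qed
    have cae: "cmp C a e = a" using cat_unit[OF cat aarr] ei p ce by simp
    define R where "R n = concat (replicate n l)" for n
    have compR: "comp_list C e (R n) = e" for n
    proof (induction n)
      case 0 then show ?case by (simp add: R_def)
    next
      case (Suc n)
      have "comp_list C e (R (Suc n)) = comp_list C (cmp C a e) (bs @ R n)"
        by (simp add: R_def lab)
      also have "\<dots> = comp_list C e (R n)" using cae ce comp_list_append by metis
      finally show ?case using Suc by simp
    qed
    have ccR: "composable_chain C (R (Suc n))" for n
    proof (induction n)
      case 0 then show ?case using cl by (simp add: R_def)
    next
      case (Suc n)
      have "R (Suc (Suc n)) = l @ R (Suc n)" by (simp add: R_def)
      moreover have "R (Suc n) = a # (bs @ R n)" by (simp add: R_def lab)
      ultimately show ?case using cc_append[of C l a "bs @ R n"] cl Suc lastsrc lab by simp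
    qed
    have inF: "R (Suc n) \<in> factorizations C e" for n
    proof -
      have eq: "R (Suc n) = a # (bs @ R n)" by (simp add: R_def lab)
      have "composable_chain C (a # (bs @ R n))" using ccR[of n] unfolding eq .
      moreover have "set (R (Suc n)) \<subseteq> arr C - ids C" using sl by (auto simp: R_def)
      moreover have "comp_list C a (bs @ R n) = e" using compR ce comp_list_append by metis
      ultimately show ?thesis unfolding factorizations_def eq by simp
    qed
    have len: "length (R n) = n * length l" for n by (induction n) (auto simp: R_def)
    have "inj (\<lambda>n. R (Suc n))"
    proof (rule injI)
      fix x y assume "R (Suc x) = R (Suc y)"
      then have "Suc x * length l = Suc y * length l" using len by metis
      then show "x = y" using l(2) by simp
    qed
    then have "infinite (range (\<lambda>n. R (Suc n)))" using finite_imageD infinite_UNIV_nat by blast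
    moreover have "range (\<lambda>n. R (Suc n)) \<subseteq> factorizations C e" using inF by blast
    ultimately show False using fin finite_subset by blast
  qed
  ultimately show ?thesis by blast
qed

lemma mob_cat: "mobius_category C \<Longrightarrow> is_category C" unfolding mobius_category_def by simp

lemma fact_finite: "mobius_category C \<Longrightarrow> f \<in> arr C \<Longrightarrow> finite (factorizations C f)"
  unfolding mobius_category_def by blast

lemma fact_len_le: "mobius_category C \<Longrightarrow> f \<in> arr C \<Longrightarrow> l \<in> factorizations C f \<Longrightarrow> length l \<le> ell C f"
proof -
  assume m: "mobius_category C" and f: "f \<in> arr C" and l: "l \<in> factorizations C f"
  have "finite (length ` factorizations C f)" using fact_finite[OF m f] by simp
  then show ?thesis unfolding ell_def using l by (simp add: Max_ge)
qed

lemma ell_attained: "mobius_category C \<Longrightarrow> f \<in> arr C \<Longrightarrow> \<exists>l\<in>factorizations C f. length l = ell C f"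
proof -
  assume m: "mobius_category C" and f: "f \<in> arr C"
  have "finite (length ` factorizations C f)" "length ` factorizations C f \<noteq> {}"
    using fact_finite[OF m f] fact_nonempty_arr[OF mob_cat[OF m] f] by auto
  then have "ell C f \<in> length ` factorizations C f" unfolding ell_def by (rule Max_in)
  then show ?thesis by auto
qed

lemma ell_ids: "mobius_category C \<Longrightarrow> e \<in> ids C \<Longrightarrow> ell C e = 0"
proof -
  assume m: "mobius_category C" and e: "e \<in> ids C"
  have "factorizations C e = {[]}" by (rule fact_ids[OF m e])
  then show ?thesis by (simp add: ell_def)
qed

lemma ell_nonid: "mobius_category C \<Longrightarrow> f \<in> arr C \<Longrightarrow> f \<notin> ids C \<Longrightarrow> 1 \<le> ell C f"
proof -
  assume m: "mobius_category C" and f: "f \<in> arr C" "f \<notin> ids C"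
  have "[f] \<in> factorizations C f" using f unfolding factorizations_def by simp
  then show ?thesis using fact_len_le[OF m f(1)] by fastforce
qed

lemma ell0_iff: "mobius_category C \<Longrightarrow> f \<in> arr C \<Longrightarrow> ell C f = 0 \<longleftrightarrow> f \<in> ids C"
  using ell_ids ell_nonid by fastforce

lemma fact_nonid_cons: "f \<notin> ids C \<Longrightarrow> l \<in> factorizations C f \<Longrightarrow> \<exists>a bs. l = a # bs"
  unfolding factorizations_def by (cases l) auto

lemma ell_comp:
  assumes m: "mobius_category C" and a: "a \<in> arr C" and b: "b \<in> arr C" and ab: "tgt C a = src C b"
  shows "ell C a + ell C b \<le> ell C (cmp C b a)"
proof -
  have cat: "is_category C" using mob_cat[OF m] .
  show ?thesis
  proof (cases "a \<in> ids C")
    case True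
    then have "a = idn C (src C b)" using ids_cases[OF cat] ab by metis
    then have "cmp C b a = b" using cat_unit[OF cat b] by simp
    then show ?thesis using ell_ids[OF m True] by simp
  next
    case anid: False
    show ?thesis
    proof (cases "b \<in> ids C")
      case True
      then have "b = idn C (tgt C a)" using ids_cases[OF cat] ab by metis
      then have "cmp C b a = a" using cat_unit[OF cat a] by simp
      then show ?thesis using ell_ids[OF m True] by simp
    next
      case bnid: False
      obtain la where la: "la \<in> factorizations C a" "length la = ell C a" using ell_attained[OF m a] by blast
      obtain lb where lb: "lb \<in> factorizations C b" "length lb = ell C b" using ell_attained[OF m b] by blast
      obtain a0 as where la0: "la = a0 # as" using fact_nonid_cons[OF anid la(1)] by blast
      obtain b0 bs where lb0: "lb = b0 # bs" using fact_nonid_cons[OF bnid lb(1)] by blast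
      have sa: "set la \<subseteq> arr C - ids C" and ca: "composable_chain C la" and ea: "comp_list C a0 as = a"
        using la(1) la0 unfolding factorizations_def by auto
      have sb: "set lb \<subseteq> arr C - ids C" and cb: "composable_chain C lb" and eb: "comp_list C b0 bs = b"
        using lb(1) lb0 unfolding factorizations_def by auto
      have sa': "set (a0#as) \<subseteq> arr C" using sa la0 by auto
      have sb': "set (b0#bs) \<subseteq> arr C" using sb lb0 by auto
      have pa: "tgt C (comp_list C a0 as) = tgt C (last (a0#as))"
        using comp_list_props[OF cat sa'] ca la0 by blast
      have pb: "src C (comp_list C b0 bs) = src C b0"
        using comp_list_props[OF cat sb'] cb lb0 by blast
      have link: "tgt C (last la) = src C b0" using pa pb ea eb ab la0 by simp
      have cc: "composable_chain C (la @ b0 # bs)"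
        using cc_append[of C la b0 bs] ca cb lb0 link by simp
      have "comp_list C a0 (as @ b0 # bs) = comp_list C (cmp C b0 a) bs"
        using comp_list_append ea by (metis comp_list.simps(2))
      also have "\<dots> = cmp C (comp_list C b0 bs) a"
        using comp_list_assoc[OF cat sb'] cb lb0 a ab pb eb by simp
      finally have "comp_list C a0 (as @ b0 # bs) = cmp C b a" using eb by simp
      then have "la @ lb \<in> factorizations C (cmp C b a)"
        using sa sb cc lb0 la0 unfolding factorizations_def by auto
      moreover have "cmp C b a \<in> arr C" using cat_cmp[OF cat a b ab] by simp
      ultimately have "length (la @ lb) \<le> ell C (cmp C b a)" using fact_len_le[OF m] by blast
      then show ?thesis using la lb by simp
    qed
  qed
qed

lemma idn_comp_iff:
  assumes m: "mobius_category C" and a: "a \<in> arr C" and b: "b \<in> arr C" and ab: "tgt C a = src C b"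
  and ai: "a \<in> ids C"
  shows "cmp C b a = b \<and> a = idn C (src C b)"
proof -
  have cat: "is_category C" using mob_cat[OF m] .
  have "a = idn C (src C b)" using ids_cases[OF cat ai] ab by metis
  then show ?thesis using cat_unit[OF cat b] by simp
qed

lemma comp_idn_iff:
  assumes m: "mobius_category C" and a: "a \<in> arr C" and b: "b \<in> arr C" and ab: "tgt C a = src C b"
  and bi: "b \<in> ids C"
  shows "cmp C b a = a \<and> b = idn C (tgt C a)"
proof -
  have cat: "is_category C" using mob_cat[OF m] .
  have "b = idn C (tgt C a)" using ids_cases[OF cat bi] ab by metis
  then show ?thesis using cat_unit[OF cat a] by simp
qed

lemma pairs_finite:
  assumes m: "mobius_category C"
  shows "finite {(a,b). a \<in> arr C \<and> b \<in> arr C \<and> tgt C a = src C b \<and> cmp C b a = g}"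
proof (cases "g \<in> arr C")
  case False
  then have "{(a,b). a \<in> arr C \<and> b \<in> arr C \<and> tgt C a = src C b \<and> cmp C b a = g} = {}"
    using cat_cmp[OF mob_cat[OF m]] by blast
  then show ?thesis by (metis finite.emptyI)
next
  case True
  have "{(a,b). a \<in> arr C \<and> b \<in> arr C \<and> tgt C a = src C b \<and> cmp C b a = g} \<subseteq>
     {(idn C (src C g), g), (g, idn C (tgt C g))} \<union> (\<lambda>l. (l!0, l!1)) ` factorizations C g"
  proof -
    have key: "(a,b) \<in> {(idn C (src C g), g), (g, idn C (tgt C g))} \<union> (\<lambda>l. (l!0, l!1)) ` factorizations C g"
      if h: "a \<in> arr C" "b \<in> arr C" "tgt C a = src C b" "g = cmp C b a" for a b
    proof (cases "a \<in> ids C")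
      case True
      have X1: "cmp C b a = b" and X2: "a = idn C (src C b)" using idn_comp_iff[OF m h(1-3) True] by auto
      have gb: "g = b" using h(4) X1 by simp
      show ?thesis using X2 gb by simp
    next
      case anid: False
      show ?thesis
      proof (cases "b \<in> ids C")
        case True
        have X1: "cmp C b a = a" and X2: "b = idn C (tgt C a)" using comp_idn_iff[OF m h(1-3) True] by auto
        have gb: "g = a" using h(4) X1 by simp
        show ?thesis using X2 gb by simp
      next
        case False
        then have "[a,b] \<in> factorizations C g" using anid h unfolding factorizations_def by simp
        then have "(a,b) \<in> (\<lambda>l. (l ! 0, l ! 1)) ` factorizations C g" by force
        then show ?thesis by blast
      qed
    qed
    show ?thesis using key by auto
  qed
  moreover have "finite ({(idn C (src C g), g), (g, idn C (tgt C g))} \<union> (\<lambda>l. (l!0, l!1)) ` factorizations C g)"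
    using fact_finite[OF m True] by simp
  ultimately show ?thesis using finite_subset by blast
qed

theorem proposition6p3:
  fixes C :: "('o, 'a) category"
  assumes "mobius_category C"
  shows
    "(\<forall>f\<in>arr C. finite (length ` factorizations C f) \<and> factorizations C f \<noteq> {})
   \<and> (\<Union>n. filt C n) = (incidence_space C :: ('a \<Rightarrow> 'k::field) set)
   \<and> (\<forall>n. (filt C n :: ('a \<Rightarrow> 'k) set) \<subseteq> filt C (Suc n))
   \<and> (\<forall>v\<in>incidence_space C. (comult C (v :: 'a \<Rightarrow> 'k)) \<in> tensor_space C)
   \<and> (\<forall>n. \<forall>v\<in>filt C n. (comult C (v :: 'a \<Rightarrow> 'k)) \<in> filt_tensor C n)
   \<and> (\<forall>n\<ge>1. (grad C n :: ('a \<Rightarrow> 'k) set) \<subseteq> filt C n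
        \<and> (filt C (n - 1) :: ('a \<Rightarrow> 'k) set) \<subseteq> filt C n
        \<and> (filt C (n - 1) \<inter> grad C n :: ('a \<Rightarrow> 'k) set) = {\<lambda>_. 0}
        \<and> (\<forall>v\<in>(filt C n :: ('a \<Rightarrow> 'k) set). \<exists>u\<in>filt C (n - 1). \<exists>w\<in>grad C n. v = (\<lambda>g. u g + w g))
        \<and> (\<forall>w\<in>(grad C n :: ('a \<Rightarrow> 'k) set). counit C w = 0))
   \<and> (filt C 0 :: ('a \<Rightarrow> 'k) set) = span_arrows C (ids C)
   \<and> (grad C 0 :: ('a \<Rightarrow> 'k) set) = filt C 0
   \<and> (\<forall>x\<in>obj C. (bv (idn C x) :: 'a \<Rightarrow> 'k) \<noteq> (\<lambda>_. 0)
        \<and> comult C (bv (idn C x) :: 'a \<Rightarrow> 'k) = tensor (bv (idn C x)) (bv (idn C x)))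
   \<and> (\<forall>f\<in>arr C.
        proj_tensor C 0 (ell C f) (comult C (bv f :: 'a \<Rightarrow> 'k)) = tensor (bv (idn C (src C f))) (bv f)
      \<and> proj_tensor C (ell C f) 0 (comult C (bv f :: 'a \<Rightarrow> 'k)) = tensor (bv f) (bv (idn C (tgt C f))))"
proof -
  note m = assms
  have cat: "is_category C" using mob_cat[OF m] .
  have P1: "\<forall>f\<in>arr C. finite (length ` factorizations C f) \<and> factorizations C f \<noteq> {}"
    using fact_finite[OF m] fact_nonempty_arr[OF cat] by blast
  have P2: "(\<Union>n. filt C n) = (incidence_space C :: ('a \<Rightarrow> 'k::field) set)"
  proof
    show "(\<Union>n. filt C n) \<subseteq> (incidence_space C :: ('a \<Rightarrow> 'k::field) set)"
      unfolding filt_def span_arrows_def by blast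
  next
    show "(incidence_space C :: ('a \<Rightarrow> 'k::field) set) \<subseteq> (\<Union>n. filt C n)"
    proof
      fix v :: "'a \<Rightarrow> 'k" assume v: "v \<in> incidence_space C"
      let ?S = "{f. v f \<noteq> 0}"
      have fin: "finite ?S" and sub: "\<forall>f. v f \<noteq> 0 \<longrightarrow> f \<in> arr C" using v unfolding incidence_space_def by auto
      define n where "n = Max (ell C ` ?S)"
      have "\<forall>f. v f \<noteq> 0 \<longrightarrow> ell C f \<le> n" unfolding n_def using fin by (auto intro: Max_ge)
      then have "v \<in> filt C n" using v sub unfolding filt_def span_arrows_def by auto
      then show "v \<in> (\<Union>n. filt C n)" by blast
    qed
  qed
  have P3: "\<forall>n. (filt C n :: ('a \<Rightarrow> 'k) set) \<subseteq> filt C (Suc n)"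
    unfolding filt_def span_arrows_def by auto
  have supp_comult: "{p. comult C v p \<noteq> 0} \<subseteq> (\<Union>g\<in>{f. v f \<noteq> 0}. {(a,b). a \<in> arr C \<and> b \<in> arr C \<and> tgt C a = src C b \<and> cmp C b a = g})"
    for v :: "'a \<Rightarrow> 'k"
    unfolding comult_def by (auto split: if_splits)
  have P4: "\<forall>v\<in>incidence_space C. (comult C (v :: 'a \<Rightarrow> 'k)) \<in> tensor_space C"
  proof
    fix v :: "'a \<Rightarrow> 'k" assume v: "v \<in> incidence_space C"
    have "finite {f. v f \<noteq> 0}" using v unfolding incidence_space_def by auto
    then have "finite (\<Union>g\<in>{f. v f \<noteq> 0}. {(a,b). a \<in> arr C \<and> b \<in> arr C \<and> tgt C a = src C b \<and> cmp C b a = g})"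
      using pairs_finite[OF m] by blast
    then have "finite {p. comult C v p \<noteq> 0}" using supp_comult finite_subset by blast
    moreover have "\<forall>p. comult C v p \<noteq> 0 \<longrightarrow> p \<in> arr C \<times> arr C"
      unfolding comult_def by (auto split: if_splits)
    ultimately show "comult C v \<in> tensor_space C" unfolding tensor_space_def by blast
  qed
  have P5: "\<forall>n. \<forall>v\<in>filt C n. (comult C (v :: 'a \<Rightarrow> 'k)) \<in> filt_tensor C n"
  proof (intro allI ballI)
    fix n and v :: "'a \<Rightarrow> 'k" assume v: "v \<in> filt C n"
    have vi: "v \<in> incidence_space C" and vs: "\<forall>f. v f \<noteq> 0 \<longrightarrow> ell C f \<le> n"
      using v unfolding filt_def span_arrows_def by auto
    have "comult C v p \<noteq> 0 \<longrightarrow> p \<in> (\<Union>i\<in>{..n}. {f \<in> arr C. ell C f \<le> i} \<times> {g \<in> arr C. ell C g \<le> n - i})" for p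
    proof (cases p)
      case (Pair a b)
      show ?thesis
      proof
        assume "comult C v p \<noteq> 0"
        then have h: "a \<in> arr C" "b \<in> arr C" "tgt C a = src C b" "v (cmp C b a) \<noteq> 0"
          unfolding comult_def Pair by (auto split: if_splits)
        have "ell C a + ell C b \<le> n" using ell_comp[OF m h(1-3)] vs h(4) by fastforce
        then show "p \<in> (\<Union>i\<in>{..n}. {f \<in> arr C. ell C f \<le> i} \<times> {g \<in> arr C. ell C g \<le> n - i})"
          using h Pair by (intro UN_I[of "ell C a"]) auto
      qed
    qed
    then show "comult C v \<in> filt_tensor C n"
      using P4 vi unfolding filt_tensor_def span_pairs_def by blast
  qed
  have P6: "\<forall>n\<ge>1. (grad C n :: ('a \<Rightarrow> 'k) set) \<subseteq> filt C n
        \<and> (filt C (n - 1) :: ('a \<Rightarrow> 'k) set) \<subseteq> filt C n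
        \<and> (filt C (n - 1) \<inter> grad C n :: ('a \<Rightarrow> 'k) set) = {\<lambda>_. 0}
        \<and> (\<forall>v\<in>(filt C n :: ('a \<Rightarrow> 'k) set). \<exists>u\<in>filt C (n - 1). \<exists>w\<in>grad C n. v = (\<lambda>g. u g + w g))
        \<and> (\<forall>w\<in>(grad C n :: ('a \<Rightarrow> 'k) set). counit C w = 0)"
  proof (intro allI impI conjI)
    fix n :: nat assume n: "1 \<le> n"
    show "(grad C n :: ('a \<Rightarrow> 'k) set) \<subseteq> filt C n"
      unfolding filt_def grad_def span_arrows_def by auto
    show "(filt C (n - 1) :: ('a \<Rightarrow> 'k) set) \<subseteq> filt C n"
      unfolding filt_def span_arrows_def by auto
    show "(filt C (n - 1) \<inter> grad C n :: ('a \<Rightarrow> 'k) set) = {\<lambda>_. 0}"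
    proof
      show "(filt C (n - 1) \<inter> grad C n :: ('a \<Rightarrow> 'k) set) \<subseteq> {\<lambda>_. 0}"
      proof
        fix v :: "'a \<Rightarrow> 'k" assume "v \<in> filt C (n - 1) \<inter> grad C n"
        then have "\<forall>f. v f \<noteq> 0 \<longrightarrow> ell C f \<le> n - 1 \<and> ell C f = n"
          unfolding filt_def grad_def span_arrows_def by auto
        then have "\<forall>f. v f = 0" using n by fastforce
        then show "v \<in> {\<lambda>_. 0}" by auto
      qed
      show "{\<lambda>_. 0} \<subseteq> (filt C (n - 1) \<inter> grad C n :: ('a \<Rightarrow> 'k) set)"
        unfolding filt_def grad_def span_arrows_def incidence_space_def by auto
    qed
    show "\<forall>v\<in>(filt C n :: ('a \<Rightarrow> 'k) set). \<exists>u\<in>filt C (n - 1). \<exists>w\<in>grad C n. v = (\<lambda>g. u g + w g)"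
    proof
      fix v :: "'a \<Rightarrow> 'k" assume v: "v \<in> filt C n"
      have fin: "finite {f. v f \<noteq> 0}" and sub: "\<forall>f. v f \<noteq> 0 \<longrightarrow> f \<in> arr C \<and> ell C f \<le> n"
        using v unfolding filt_def span_arrows_def incidence_space_def by auto
      define u where "u = (\<lambda>g. if ell C g = n then 0 else v g)"
      define w where "w = (\<lambda>g. if ell C g = n then v g else 0)"
      have "u \<in> filt C (n - 1)"
        using sub unfolding u_def filt_def span_arrows_def incidence_space_def
        by (auto intro: finite_subset[OF _ fin])
      moreover have "w \<in> grad C n"
        using sub unfolding w_def grad_def span_arrows_def incidence_space_def
        by (auto intro: finite_subset[OF _ fin])
      moreover have "v = (\<lambda>g. u g + w g)" unfolding u_def w_def by auto
      ultimately show "\<exists>u\<in>filt C (n - 1). \<exists>w\<in>grad C n. v = (\<lambda>g. u g + w g)" by blast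
    qed
    show "\<forall>w\<in>(grad C n :: ('a \<Rightarrow> 'k) set). counit C w = 0"
    proof
      fix w :: "'a \<Rightarrow> 'k" assume w: "w \<in> grad C n"
      have "\<forall>f. w f \<noteq> 0 \<longrightarrow> ell C f = n" using w unfolding grad_def span_arrows_def by auto
      then have "{f \<in> ids C. w f \<noteq> 0} = {}" using ell_ids[OF m] n by fastforce
      then show "counit C w = 0" unfolding counit_def by simp
    qed
  qed
  have idsarr: "{f \<in> arr C. ell C f \<le> 0} = ids C"
    using ell0_iff[OF m] ids_arr[OF cat] by auto
  have P7: "(filt C 0 :: ('a \<Rightarrow> 'k) set) = span_arrows C (ids C)"
    unfolding filt_def using idsarr by simp
  have P8: "(grad C 0 :: ('a \<Rightarrow> 'k) set) = filt C 0"
    unfolding filt_def grad_def by simp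
  have P9: "\<forall>x\<in>obj C. (bv (idn C x) :: 'a \<Rightarrow> 'k) \<noteq> (\<lambda>_. 0)
        \<and> comult C (bv (idn C x) :: 'a \<Rightarrow> 'k) = tensor (bv (idn C x)) (bv (idn C x))"
  proof
    fix x assume x: "x \<in> obj C"
    let ?e = "idn C x"
    have eids: "?e \<in> ids C" using x unfolding ids_def by blast
    have e: "?e \<in> arr C" "src C ?e = x" "tgt C ?e = x" using cat_idn[OF cat x] by auto
    have "(bv ?e :: 'a \<Rightarrow> 'k) ?e \<noteq> 0" unfolding bv_def by simp
    then have A: "(bv ?e :: 'a \<Rightarrow> 'k) \<noteq> (\<lambda>_. 0)" by auto
    have ee: "cmp C ?e ?e = ?e" using cat_unit[OF cat e(1)] e by simp
    have key: "(a \<in> arr C \<and> b \<in> arr C \<and> tgt C a = src C b \<and> cmp C b a = ?e) \<longleftrightarrow> (a = ?e \<and> b = ?e)" for a b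
    proof
      assume h: "a \<in> arr C \<and> b \<in> arr C \<and> tgt C a = src C b \<and> cmp C b a = ?e"
      then have h1: "a \<in> arr C" "b \<in> arr C" "tgt C a = src C b" "cmp C b a = ?e" by auto
      show "a = ?e \<and> b = ?e"
      proof (cases "a \<in> ids C")
        case True
        have X1: "cmp C b a = b" and X2: "a = idn C (src C b)" using idn_comp_iff[OF m h1(1-3) True] by auto
        have "b = ?e" using X1 h1(4) by simp
        then show ?thesis using X2 e by simp
      next
        case anid: False
        show ?thesis
        proof (cases "b \<in> ids C")
          case True
          have X1: "cmp C b a = a" and X2: "b = idn C (tgt C a)" using comp_idn_iff[OF m h1(1-3) True] by auto
          have "a = ?e" using X1 h1(4) by simp
          then show ?thesis using X2 e by simp
        next
          case False
          then have "[a,b] \<in> factorizations C ?e" using anid h1 unfolding factorizations_def by simp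
          then show ?thesis using fact_ids[OF m eids] by simp
        qed
      qed
    next
      assume "a = ?e \<and> b = ?e"
      then show "a \<in> arr C \<and> b \<in> arr C \<and> tgt C a = src C b \<and> cmp C b a = ?e" using e ee by simp
    qed
    have B: "comult C (bv ?e :: 'a \<Rightarrow> 'k) = tensor (bv ?e) (bv ?e)"
    proof (rule ext, clarify)
      fix a b
      show "comult C (bv ?e :: 'a \<Rightarrow> 'k) (a, b) = tensor (bv ?e) (bv ?e) (a, b)"
        using key[of a b] unfolding comult_def tensor_def bv_def by auto
    qed
    show "(bv ?e :: 'a \<Rightarrow> 'k) \<noteq> (\<lambda>_. 0) \<and> comult C (bv ?e :: 'a \<Rightarrow> 'k) = tensor (bv ?e) (bv ?e)"
      using A B by simp
  qed
  have P10: "\<forall>f\<in>arr C.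
        proj_tensor C 0 (ell C f) (comult C (bv f :: 'a \<Rightarrow> 'k)) = tensor (bv (idn C (src C f))) (bv f)
      \<and> proj_tensor C (ell C f) 0 (comult C (bv f :: 'a \<Rightarrow> 'k)) = tensor (bv f) (bv (idn C (tgt C f)))"
  proof
    fix f assume f: "f \<in> arr C"
    have so: "src C f \<in> obj C" "tgt C f \<in> obj C" using cat_src_tgt[OF cat f] by auto
    let ?s = "idn C (src C f)" and ?t = "idn C (tgt C f)"
    have s: "?s \<in> arr C" "src C ?s = src C f" "tgt C ?s = src C f" "?s \<in> ids C"
      using cat_idn[OF cat so(1)] so unfolding ids_def by auto
    have t: "?t \<in> arr C" "src C ?t = tgt C f" "tgt C ?t = tgt C f" "?t \<in> ids C"
      using cat_idn[OF cat so(2)] so unfolding ids_def by auto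
    have u: "cmp C f ?s = f" "cmp C ?t f = f" using cat_unit[OF cat f] by auto
    have key1: "(a \<in> arr C \<and> b \<in> arr C \<and> ell C a = 0 \<and> ell C b = ell C f \<and> tgt C a = src C b \<and> cmp C b a = f)
        \<longleftrightarrow> (a = ?s \<and> b = f)" for a b
    proof
      assume h: "a \<in> arr C \<and> b \<in> arr C \<and> ell C a = 0 \<and> ell C b = ell C f \<and> tgt C a = src C b \<and> cmp C b a = f"
      then have h1: "a \<in> arr C" "b \<in> arr C" "tgt C a = src C b" "cmp C b a = f" "a \<in> ids C"
        using ell0_iff[OF m] by auto
      have X1: "cmp C b a = b" and X2: "a = idn C (src C b)" using idn_comp_iff[OF m h1(1-3) h1(5)] by auto
      have "b = f" using X1 h1(4) by simp
      then show "a = ?s \<and> b = f" using X2 by simp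
    next
      assume "a = ?s \<and> b = f"
      then show "a \<in> arr C \<and> b \<in> arr C \<and> ell C a = 0 \<and> ell C b = ell C f \<and> tgt C a = src C b \<and> cmp C b a = f"
        using s f u ell_ids[OF m s(4)] by simp
    qed
    have key2: "(a \<in> arr C \<and> b \<in> arr C \<and> ell C a = ell C f \<and> ell C b = 0 \<and> tgt C a = src C b \<and> cmp C b a = f)
        \<longleftrightarrow> (a = f \<and> b = ?t)" for a b
    proof
      assume h: "a \<in> arr C \<and> b \<in> arr C \<and> ell C a = ell C f \<and> ell C b = 0 \<and> tgt C a = src C b \<and> cmp C b a = f"
      then have h1: "a \<in> arr C" "b \<in> arr C" "tgt C a = src C b" "cmp C b a = f" "b \<in> ids C"
        using ell0_iff[OF m] by auto
      have X1: "cmp C b a = a" and X2: "b = idn C (tgt C a)" using comp_idn_iff[OF m h1(1-3) h1(5)] by auto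
      have "a = f" using X1 h1(4) by simp
      then show "a = f \<and> b = ?t" using X2 by simp
    next
      assume "a = f \<and> b = ?t"
      then show "a \<in> arr C \<and> b \<in> arr C \<and> ell C a = ell C f \<and> ell C b = 0 \<and> tgt C a = src C b \<and> cmp C b a = f"
        using t f u ell_ids[OF m t(4)] by simp
    qed
    have A: "proj_tensor C 0 (ell C f) (comult C (bv f :: 'a \<Rightarrow> 'k)) = tensor (bv ?s) (bv f)"
    proof (rule ext, clarify)
      fix a b
      show "proj_tensor C 0 (ell C f) (comult C (bv f :: 'a \<Rightarrow> 'k)) (a, b) = tensor (bv ?s) (bv f) (a, b)"
        using key1[of a b] unfolding proj_tensor_def comult_def tensor_def bv_def by auto
    qed
    have B: "proj_tensor C (ell C f) 0 (comult C (bv f :: 'a \<Rightarrow> 'k)) = tensor (bv f) (bv ?t)"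
    proof (rule ext, clarify)
      fix a b
      show "proj_tensor C (ell C f) 0 (comult C (bv f :: 'a \<Rightarrow> 'k)) (a, b) = tensor (bv f) (bv ?t) (a, b)"
        using key2[of a b] unfolding proj_tensor_def comult_def tensor_def bv_def by auto
    qed
    show "proj_tensor C 0 (ell C f) (comult C (bv f :: 'a \<Rightarrow> 'k)) = tensor (bv ?s) (bv f)
      \<and> proj_tensor C (ell C f) 0 (comult C (bv f :: 'a \<Rightarrow> 'k)) = tensor (bv f) (bv ?t)"
      using A B by simp
  qed
  show ?thesis
    apply (intro conjI)
             apply (rule P1)
            apply (rule P2)
           apply (rule P3)
          apply (rule P4)
         apply (rule P5)
        apply (rule P6)
       apply (rule P7)
      apply (rule P8)
     apply (rule P9)
    apply (rule P10)
    done
qed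

end
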